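(* Let $X$ satisfy (P1) and (P2), and let $\alpha$ be a saddle connection on $X$ which is neither a side nor a diagonal of a polygon, with polygonal decomposition $\alpha=\alpha_1\cup\dots\cup\alpha_k$. Then \[ \left\lceil \tfrac{k}{2}\right\rceil \le p_\alpha+q_\alpha, \] with equality if and only if $\alpha$ is odd.
   Context: $X$ is a translation surface obtained from finitely many Euclidean polygons by gluing pairs of parallel sides of equal length by translations, with (P1): each polygon convex with all angles obtuse or right; (P2): no two sides of the same polygon are identified. Saddle connection: straight segment between singularities (images of vertices) with none in its interior; a diagonal is a segment inside a polygon joining two non-adjacent vertices. Polygonal decomposition: cut $\alpha$ each time it passes from one polygon to another, giving consecutive segments $\alpha_1,\dots,\alpha_k$ ($k\ge2$ here), each in one polygon; $\alpha_1$ and $\alpha_k$ are non-adjacent. A segment in polygon $P$ is adjacent if it goes from the relative interior of a side $e$ of $P$ to the relative interior of a side adjacent to $e$; otherwise non-adjacent. $p_\alpha$ = number of non-adjacent segments; $q_\alpha=\sum\lfloor r/2\rfloor$ over maximal runs of consecutive adjacent segments of size $r$. $\alpha$ is odd if no two non-adjacent segments are consecutive and between any two consecutive non-adjacent segments there is an odd number of adjacent segments. *)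

theory Defs
  imports "HOL-Analysis.Analysis"
begin

text \<open>Points of the plane are complex numbers.  A polygon is the list of its
vertices in counterclockwise order; vertex j is read modulo the length.
Side j of a polygon goes from vertex j to vertex j+1.\<close>

definition cross2 :: "complex \<Rightarrow> complex \<Rightarrow> real" where
  "cross2 u w = Im (cnj u * w)"

definition dot2 :: "complex \<Rightarrow> complex \<Rightarrow> real" where
  "dot2 u w = Re (cnj u * w)"

definition vtx :: "complex list \<Rightarrow> nat \<Rightarrow> complex" where
  "vtx v j = v ! (j mod length v)"

definition edge_vec :: "complex list \<Rightarrow> nat \<Rightarrow> complex" where
  "edge_vec v j = vtx v (Suc j) - vtx v j"

definition side_relint :: "complex list \<Rightarrow> nat \<Rightarrow> complex set" where
  "side_relint v j = open_segment (vtx v j) (vtx v (Suc j))"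

definition region :: "complex list \<Rightarrow> complex set" where
  "region v = convex hull (set v)"

text \<open>(P1): convex polygon (strictly convex corners, counterclockwise),
all angles obtuse or right.\<close>
definition P1_polygon :: "complex list \<Rightarrow> bool" where
  "P1_polygon v \<longleftrightarrow> length v \<ge> 3 \<and>
     (\<forall>j<length v. \<forall>l<length v. l \<noteq> j \<and> l \<noteq> Suc j mod length v \<longrightarrow>
         cross2 (edge_vec v j) (v ! l - v ! j) > 0) \<and>
     (\<forall>j<length v. dot2 (vtx v (j + length v - 1) - v ! j) (vtx v (Suc j) - v ! j) \<le> 0)"

text \<open>Translation surface given by N polygons P 0,...,P (N-1) and a pairing
sigma of their sides (side (i,j) = side j of polygon i).  Paired sides are
parallel of equal length, glued by a translation (orientation-compatible,
hence opposite edge vectors for counterclockwise polygons).\<close>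
definition translation_surface ::
  "nat \<Rightarrow> (nat \<Rightarrow> complex list) \<Rightarrow> (nat \<times> nat \<Rightarrow> nat \<times> nat) \<Rightarrow> bool" where
  "translation_surface N P \<sigma> \<longleftrightarrow>
     (\<forall>i<N. length (P i) \<ge> 3) \<and>
     (\<forall>i<N. \<forall>j<length (P i).
        fst (\<sigma> (i, j)) < N \<and> snd (\<sigma> (i, j)) < length (P (fst (\<sigma> (i, j)))) \<and>
        \<sigma> (i, j) \<noteq> (i, j) \<and> \<sigma> (\<sigma> (i, j)) = (i, j) \<and>
        edge_vec (P (fst (\<sigma> (i, j)))) (snd (\<sigma> (i, j))) = - edge_vec (P i) j)"

definition P1 :: "nat \<Rightarrow> (nat \<Rightarrow> complex list) \<Rightarrow> bool" where
  "P1 N P \<longleftrightarrow> (\<forall>i<N. P1_polygon (P i))"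

definition P2 :: "nat \<Rightarrow> (nat \<Rightarrow> complex list) \<Rightarrow> (nat \<times> nat \<Rightarrow> nat \<times> nat) \<Rightarrow> bool" where
  "P2 N P \<sigma> \<longleftrightarrow> (\<forall>i<N. \<forall>j<length (P i). fst (\<sigma> (i, j)) \<noteq> i)"

definition glue_shift ::
  "(nat \<Rightarrow> complex list) \<Rightarrow> (nat \<times> nat \<Rightarrow> nat \<times> nat) \<Rightarrow> nat \<Rightarrow> nat \<Rightarrow> complex" where
  "glue_shift P \<sigma> i j = vtx (P (fst (\<sigma> (i, j)))) (Suc (snd (\<sigma> (i, j)))) - vtx (P i) j"

text \<open>A saddle connection, given through its polygonal decomposition: pieces
m = 1..k, piece m being the segment from a m to b m in polygon P (pg m).  For k = 1 the segment lies in the polygon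
(a side or a diagonal); for k \<ge> 2 each piece crosses the interior of its
polygon.\<close>
definition saddle_connection ::
  "nat \<Rightarrow> (nat \<Rightarrow> complex list) \<Rightarrow> (nat \<times> nat \<Rightarrow> nat \<times> nat) \<Rightarrow>
   nat \<Rightarrow> (nat \<Rightarrow> nat) \<Rightarrow> (nat \<Rightarrow> complex) \<Rightarrow> (nat \<Rightarrow> complex) \<Rightarrow> bool" where
  "saddle_connection N P \<sigma> k pg a b \<longleftrightarrow>
     k \<ge> 1 \<and>
     (\<forall>m\<in>{1..k}. pg m < N \<and> a m \<noteq> b m \<and>
         closed_segment (a m) (b m) \<subseteq> region (P (pg m)) \<and>
         open_segment (a m) (b m) \<inter> set (P (pg m)) = {}) \<and>
     a 1 \<in> set (P (pg 1)) \<and> b k \<in> set (P (pg k)) \<and>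
     (\<exists>d. d \<noteq> 0 \<and> (\<forall>m\<in>{1..k}. \<exists>t>0. b m - a m = complex_of_real t * d)) \<and>
     (k \<ge> 2 \<longrightarrow> (\<forall>m\<in>{1..k}. open_segment (a m) (b m) \<subseteq> interior (region (P (pg m))))) \<and>
     (\<forall>m\<in>{1..<k}. \<exists>j<length (P (pg m)).
         b m \<in> side_relint (P (pg m)) j \<and>
         pg (Suc m) = fst (\<sigma> (pg m, j)) \<and>
         a (Suc m) = b m + glue_shift P \<sigma> (pg m) j)"

definition is_side ::
  "(nat \<Rightarrow> complex list) \<Rightarrow> nat \<Rightarrow> (nat \<Rightarrow> nat) \<Rightarrow> (nat \<Rightarrow> complex) \<Rightarrow> (nat \<Rightarrow> complex) \<Rightarrow> bool" where
  "is_side P k pg a b \<longleftrightarrow> k = 1 \<and>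
     (\<exists>j<length (P (pg 1)).
        {a 1, b 1} = {vtx (P (pg 1)) j, vtx (P (pg 1)) (Suc j)})"

definition is_diagonal ::
  "(nat \<Rightarrow> complex list) \<Rightarrow> nat \<Rightarrow> (nat \<Rightarrow> nat) \<Rightarrow> (nat \<Rightarrow> complex) \<Rightarrow> (nat \<Rightarrow> complex) \<Rightarrow> bool" where
  "is_diagonal P k pg a b \<longleftrightarrow> k = 1 \<and>
     closed_segment (a 1) (b 1) \<subseteq> region (P (pg 1)) \<and>
     (\<exists>j<length (P (pg 1)). \<exists>l<length (P (pg 1)).
        a 1 = P (pg 1) ! j \<and> b 1 = P (pg 1) ! l \<and> l \<noteq> j \<and>
        l \<noteq> Suc j mod length (P (pg 1)) \<and> j \<noteq> Suc l mod length (P (pg 1)))"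

definition adjacent_piece ::
  "(nat \<Rightarrow> complex list) \<Rightarrow> (nat \<Rightarrow> nat) \<Rightarrow> (nat \<Rightarrow> complex) \<Rightarrow> (nat \<Rightarrow> complex) \<Rightarrow> nat \<Rightarrow> bool" where
  "adjacent_piece P pg a b m \<longleftrightarrow>
     (\<exists>j<length (P (pg m)). \<exists>j'<length (P (pg m)).
        a m \<in> side_relint (P (pg m)) j \<and> b m \<in> side_relint (P (pg m)) j' \<and>
        (j' = Suc j mod length (P (pg m)) \<or> j = Suc j' mod length (P (pg m))))"

definition p_alpha :: "nat \<Rightarrow> (nat \<Rightarrow> bool) \<Rightarrow> nat" where
  "p_alpha k adj = card {m\<in>{1..k}. \<not> adj m}"

definition max_runs :: "nat \<Rightarrow> (nat \<Rightarrow> bool) \<Rightarrow> (nat \<times> nat) set" where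
  "max_runs k adj = {(s, t). 1 \<le> s \<and> s \<le> t \<and> t \<le> k \<and> (\<forall>m\<in>{s..t}. adj m) \<and>
       (s = 1 \<or> \<not> adj (s - 1)) \<and> (t = k \<or> \<not> adj (Suc t))}"

definition q_alpha :: "nat \<Rightarrow> (nat \<Rightarrow> bool) \<Rightarrow> nat" where
  "q_alpha k adj = (\<Sum>(s, t)\<in>max_runs k adj. (t - s + 1) div 2)"

definition odd_sc :: "nat \<Rightarrow> (nat \<Rightarrow> bool) \<Rightarrow> bool" where
  "odd_sc k adj \<longleftrightarrow>
     (\<forall>m\<in>{1..<k}. \<not> (\<not> adj m \<and> \<not> adj (Suc m))) \<and>
     (\<forall>m1 m2. 1 \<le> m1 \<and> m1 < m2 \<and> m2 \<le> k \<and> \<not> adj m1 \<and> \<not> adj m2 \<and>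
         (\<forall>m. m1 < m \<and> m < m2 \<longrightarrow> adj m) \<longrightarrow> odd (m2 - m1 - 1))"

end

theory Submission imports Defs begin

lemma base1:
  assumes "\<not> adj (1::nat)"
  shows "p_alpha 1 adj = 1" "q_alpha 1 adj = 0" "odd_sc 1 adj"
proof -
  have "{m\<in>{1..1::nat}. \<not> adj m} = {1}" using assms by auto
  thus "p_alpha 1 adj = 1" by (simp add: p_alpha_def)
  have "max_runs 1 adj = {}" using assms unfolding max_runs_def
    by (auto simp: le_antisym)
  thus "q_alpha 1 adj = 0" by (simp add: q_alpha_def)
  show "odd_sc 1 adj" unfolding odd_sc_def by auto
qed

lemma step:
  assumes k: "1 < k" and nk: "\<not> adj k" and m0: "1 \<le> m0" "m0 < k" "\<not> adj m0"
    and btw: "\<And>m. m0 < m \<Longrightarrow> m < k \<Longrightarrow> adj m"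
  shows "p_alpha k adj = p_alpha m0 adj + 1"
    "q_alpha k adj = q_alpha m0 adj + (k - m0 - 1) div 2"
    "odd_sc k adj \<longleftrightarrow> odd_sc m0 adj \<and> odd (k - m0 - 1)"
proof -
  have "{m\<in>{1..k}. \<not> adj m} = insert k {m\<in>{1..m0}. \<not> adj m}"
    using btw k nk m0 by (auto simp: not_le intro: leI)
  moreover have "k \<notin> {m\<in>{1..m0}. \<not> adj m}" using m0 by auto
  ultimately show "p_alpha k adj = p_alpha m0 adj + 1" unfolding p_alpha_def by simp
next
  define R where "R = (if m0 + 1 < k then {(m0+1, k-1)} else {})"
  have fin: "finite (max_runs n adj)" for n
    by (rule finite_subset[of _ "{1..n}\<times>{1..n}"]) (auto simp: max_runs_def)
  have eq: "max_runs k adj = max_runs m0 adj \<union> R"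
  proof (intro equalityI subsetI)
    fix x assume x: "x \<in> max_runs k adj"
    obtain s t where st: "x = (s,t)" by force
    have h: "1 \<le> s" "s \<le> t" "t \<le> k" "\<forall>m\<in>{s..t}. adj m" "s = 1 \<or> \<not> adj (s - 1)" "t = k \<or> \<not> adj (Suc t)"
      using x st by (auto simp: max_runs_def)
    have "t < k" using h nk by (metis atLeastAtMost_iff le_neq_implies_less order_refl)
    have "t \<noteq> m0" using h m0 by auto
    show "x \<in> max_runs m0 adj \<union> R"
    proof (cases "t < m0")
      case True
      then show ?thesis using h st \<open>t<k\<close> unfolding max_runs_def by auto
    next
      case False
      hence "m0 < t" using \<open>t \<noteq> m0\<close> by auto
      have "m0 < s"
      proof (rule ccontr)
        assume "\<not> m0 < s"
        hence "m0 \<in> {s..t}" using \<open>m0 < t\<close> by auto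
        thus False using h m0 by auto
      qed
      have "s = m0 + 1"
      proof (rule ccontr)
        assume "s \<noteq> m0 + 1"
        hence "m0 < s - 1" "s - 1 < k" "s \<noteq> 1" using \<open>m0 < s\<close> \<open>t<k\<close> h m0 by auto
        thus False using btw h by auto
      qed
      have "t = k - 1"
      proof (rule ccontr)
        assume "t \<noteq> k - 1"
        hence "m0 < Suc t" "Suc t < k" using \<open>m0 < t\<close> \<open>t<k\<close> by auto
        thus False using btw h \<open>t<k\<close> by auto
      qed
      then show ?thesis using st \<open>s = m0+1\<close> \<open>m0 < t\<close> by (auto simp: R_def)
    qed
  next
    fix x assume x: "x \<in> max_runs m0 adj \<union> R"
    show "x \<in> max_runs k adj"
    proof (cases "x \<in> R")
      case True
      hence x': "x = (m0+1, k-1)" "m0 + 1 < k" by (auto simp: R_def split: if_splits)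
      show ?thesis unfolding x'(1) max_runs_def using x' btw nk m0 by auto
    next
      case False
      then obtain s t where st: "x = (s,t)" "(s,t) \<in> max_runs m0 adj" using x False by (cases x) auto
      have h: "1 \<le> s" "s \<le> t" "t \<le> m0" "\<forall>m\<in>{s..t}. adj m" "s = 1 \<or> \<not> adj (s - 1)" "t = m0 \<or> \<not> adj (Suc t)"
        using st by (auto simp: max_runs_def)
      have "t \<noteq> m0" using h m0 by auto
      thus ?thesis using h st m0 unfolding max_runs_def by auto
    qed
  qed
  have finR: "finite R" by (simp add: R_def)
  have disj: "max_runs m0 adj \<inter> R = {}" unfolding R_def max_runs_def by auto
  have "q_alpha k adj = q_alpha m0 adj + (\<Sum>(s, t)\<in>R. (t - s + 1) div 2)"
    unfolding q_alpha_def eq by (rule sum.union_disjoint[OF fin finR disj])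
  also have "(\<Sum>(s, t)\<in>R. (t - s + 1) div 2) = (k - m0 - 1) div 2"
    by (auto simp: R_def)
  finally show "q_alpha k adj = q_alpha m0 adj + (k - m0 - 1) div 2" .
next
  show "odd_sc k adj \<longleftrightarrow> odd_sc m0 adj \<and> odd (k - m0 - 1)"
  proof
    assume o: "odd_sc k adj"
    have 1: "\<forall>m\<in>{1..<k}. \<not> (\<not> adj m \<and> \<not> adj (Suc m))"
      and 2: "\<And>m1 m2. 1 \<le> m1 \<Longrightarrow> m1 < m2 \<Longrightarrow> m2 \<le> k \<Longrightarrow> \<not> adj m1 \<Longrightarrow> \<not> adj m2 \<Longrightarrow>
         (\<forall>m. m1 < m \<and> m < m2 \<longrightarrow> adj m) \<Longrightarrow> odd (m2 - m1 - 1)"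
      using o unfolding odd_sc_def by blast+
    have "odd (k - m0 - 1)" using 2[of m0 k] m0 nk btw by auto
    moreover have "odd_sc m0 adj" unfolding odd_sc_def
    proof (intro conjI ballI allI impI)
      fix m assume "m \<in> {1..<m0}" thus "\<not> (\<not> adj m \<and> \<not> adj (Suc m))" using 1 m0 by auto
    next
      fix m1 m2 assume "1 \<le> m1 \<and> m1 < m2 \<and> m2 \<le> m0 \<and> \<not> adj m1 \<and> \<not> adj m2 \<and> (\<forall>m. m1 < m \<and> m < m2 \<longrightarrow> adj m)"
      thus "odd (m2 - m1 - 1)" using 2[of m1 m2] m0 by auto
    qed
    ultimately show "odd_sc m0 adj \<and> odd (k - m0 - 1)" by simp
  next
    assume o: "odd_sc m0 adj \<and> odd (k - m0 - 1)"
    have 1: "\<forall>m\<in>{1..<m0}. \<not> (\<not> adj m \<and> \<not> adj (Suc m))"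
      and 2: "\<And>m1 m2. 1 \<le> m1 \<Longrightarrow> m1 < m2 \<Longrightarrow> m2 \<le> m0 \<Longrightarrow> \<not> adj m1 \<Longrightarrow> \<not> adj m2 \<Longrightarrow>
         (\<forall>m. m1 < m \<and> m < m2 \<longrightarrow> adj m) \<Longrightarrow> odd (m2 - m1 - 1)"
      and g: "odd (k - m0 - 1)"
      using o unfolding odd_sc_def by blast+
    have gk: "m0 + 1 < k" proof (rule ccontr)
      assume "\<not> m0 + 1 < k"
      hence "k - m0 - 1 = 0" by simp
      thus False using g by simp
    qed
    show "odd_sc k adj" unfolding odd_sc_def
    proof (intro conjI ballI allI impI)
      fix m assume m: "m \<in> {1..<k}"
      show "\<not> (\<not> adj m \<and> \<not> adj (Suc m))"
      proof (cases "m < m0")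
        case True thus ?thesis using 1 m by auto
      next
        case False
        thus ?thesis using btw gk m by (cases "m = m0") auto
      qed
    next
      fix m1 m2 assume h: "1 \<le> m1 \<and> m1 < m2 \<and> m2 \<le> k \<and> \<not> adj m1 \<and> \<not> adj m2 \<and> (\<forall>m. m1 < m \<and> m < m2 \<longrightarrow> adj m)"
      show "odd (m2 - m1 - 1)"
      proof (cases "m2 \<le> m0")
        case True thus ?thesis using 2[of m1 m2] h by auto
      next
        case False
        hence "m2 = k" using h btw by (meson le_neq_implies_less not_le)
        moreover have "m1 = m0"
        proof -
          have "\<not> m1 < m0" using h m0 \<open>m2 = k\<close> by auto
          moreover have "\<not> m0 < m1" using h btw by auto
          ultimately show ?thesis by simp
        qed
        ultimately show ?thesis using g by simp
      qed
    qed
  qed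
qed


lemma comb:
  fixes adj :: "nat \<Rightarrow> bool"
  shows "1 \<le> k \<Longrightarrow> \<not> adj 1 \<Longrightarrow> \<not> adj k \<Longrightarrow>
    k + 1 \<le> 2 * (p_alpha k adj + q_alpha k adj) \<and>
    (2 * (p_alpha k adj + q_alpha k adj) = k + 1 \<longleftrightarrow> odd_sc k adj)"
proof (induction k rule: less_induct)
  case (less k)
  show ?case
  proof (cases "k = 1")
    case True
    thus ?thesis using base1[of adj] less.prems by simp
  next
    case False
    hence k: "1 < k" using less.prems by simp
    define S where "S = {m\<in>{1..<k}. \<not> adj m}"
    have finS: "finite S" by (simp add: S_def)
    have "1 \<in> S" using k less.prems by (simp add: S_def)
    hence ne: "S \<noteq> {}" by auto
    define m0 where "m0 = Max S"
    have m0S: "m0 \<in> S" using Max_in[OF finS ne] by (simp add: m0_def)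
    hence m0: "1 \<le> m0" "m0 < k" "\<not> adj m0" by (auto simp: S_def)
    have btw: "adj m" if "m0 < m" "m < k" for m
    proof (rule ccontr)
      assume "\<not> adj m"
      hence "m \<in> S" using that m0 by (simp add: S_def)
      hence "m \<le> m0" using Max_ge[OF finS] by (simp add: m0_def)
      thus False using that by simp
    qed
    note st = step[OF k less.prems(3) m0 btw]
    have IH: "m0 + 1 \<le> 2 * (p_alpha m0 adj + q_alpha m0 adj) \<and>
      (2 * (p_alpha m0 adj + q_alpha m0 adj) = m0 + 1 \<longleftrightarrow> odd_sc m0 adj)"
      using less.IH[OF m0(2) m0(1) less.prems(2) m0(3)] .
    define g where "g = k - m0 - 1"
    have kg: "k = m0 + g + 1" using m0 by (simp add: g_def)
    have gd: "odd g \<Longrightarrow> 2 * (g div 2) + 1 = g" "even g \<Longrightarrow> 2 * (g div 2) = g" by presburger+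
    have e1: "2 * (p_alpha k adj + q_alpha k adj) = 2 * (p_alpha m0 adj + q_alpha m0 adj) + 2 * (g div 2) + 2"
      using st(1,2) by (simp add: g_def)
    have e2: "odd_sc k adj \<longleftrightarrow> odd_sc m0 adj \<and> odd g" using st(3) by (simp add: g_def)
    show ?thesis unfolding e1 e2 using IH kg gd by (cases "odd g") auto
  qed
qed

lemma ceil_half: "\<lceil>real k / 2\<rceil> = int ((k + 1) div 2)"
proof (cases "even k")
  case True
  then obtain n where "k = 2 * n" by blast
  thus ?thesis by simp
next
  case False
  then obtain n where n: "k = 2 * n + 1" by (blast elim: oddE)
  have "real k / 2 = real n + 1/2" using n by simp
  hence "\<lceil>real k / 2\<rceil> = int n + 1"
    by (simp add: ceiling_eq_iff)
  thus ?thesis using n by simp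
qed

lemma vertex_not_relint:
  assumes "P1_polygon v" "x \<in> set v" "j < length v"
  shows "x \<notin> side_relint v j"
proof
  assume x: "x \<in> side_relint v j"
  obtain l where l: "l < length v" "x = v ! l" using assms(2) by (auto simp: in_set_conv_nth)
  have vj: "vtx v j = v ! j" using assms(3) by (simp add: vtx_def)
  have vs: "vtx v (Suc j) = v ! (Suc j mod length v)" by (simp add: vtx_def)
  from x obtain u where u: "0 < u" "u < 1" "x = (1 - u) *\<^sub>R vtx v j + u *\<^sub>R vtx v (Suc j)"
    and ne: "vtx v j \<noteq> vtx v (Suc j)"
    unfolding side_relint_def in_segment by blast
  have "l \<noteq> j" using x l vj by (auto simp: side_relint_def open_segment_def)
  moreover have "l \<noteq> Suc j mod length v" using x l vs by (auto simp: side_relint_def open_segment_def)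
  ultimately have c: "cross2 (edge_vec v j) (v ! l - v ! j) > 0"
    using assms(1) assms(3) l(1) unfolding P1_polygon_def by blast
  have "v ! l - v ! j = u *\<^sub>R edge_vec v j"
    using u l vj by (simp add: edge_vec_def algebra_simps)
  hence "cross2 (edge_vec v j) (v ! l - v ! j) = 0"
    by (simp add: cross2_def scaleR_conv_of_real)
  thus False using c by simp
qed

theorem mainTheorem7:
  fixes N :: nat and P :: "nat \<Rightarrow> complex list" and \<sigma> :: "nat \<times> nat \<Rightarrow> nat \<times> nat"
    and k :: nat and pg :: "nat \<Rightarrow> nat" and a b :: "nat \<Rightarrow> complex"
  assumes "translation_surface N P \<sigma>" and "P1 N P" and "P2 N P \<sigma>"
    and "saddle_connection N P \<sigma> k pg a b"
    and "\<not> is_side P k pg a b" and "\<not> is_diagonal P k pg a b"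
  shows "\<lceil>real k / 2\<rceil> \<le> int (p_alpha k (adjacent_piece P pg a b) + q_alpha k (adjacent_piece P pg a b))
    \<and> (\<lceil>real k / 2\<rceil> = int (p_alpha k (adjacent_piece P pg a b) + q_alpha k (adjacent_piece P pg a b))
         \<longleftrightarrow> odd_sc k (adjacent_piece P pg a b))"
proof -
  note sc = assms(4)[unfolded saddle_connection_def]
  have k1: "1 \<le> k" using sc by blast
  have pgN: "pg m < N" if "m \<in> {1..k}" for m using sc that by blast
  have poly: "P1_polygon (P (pg m))" if "m \<in> {1..k}" for m
    using assms(2) pgN[OF that] by (simp add: P1_def)
  have a1: "a 1 \<in> set (P (pg 1))" and bk: "b k \<in> set (P (pg k))" using sc by blast+
  have ab1: "a 1 \<noteq> b 1" using sc k1 by auto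
  have seg1: "closed_segment (a 1) (b 1) \<subseteq> region (P (pg 1))" using sc k1 by auto
  have n1: "\<not> adjacent_piece P pg a b 1"
    using vertex_not_relint[OF poly[of 1] a1] k1 unfolding adjacent_piece_def by auto
  have nk: "\<not> adjacent_piece P pg a b k"
    using vertex_not_relint[OF poly[of k] bk] k1 unfolding adjacent_piece_def by auto
  have k2: "k \<noteq> 1"
  proof
    assume kk: "k = 1"
    define v where "v = P (pg 1)"
    obtain j where j: "j < length v" "a 1 = v ! j" using a1 by (auto simp: v_def in_set_conv_nth)
    obtain l where l: "l < length v" "b 1 = v ! l" using bk kk by (auto simp: v_def in_set_conv_nth)
    have "l \<noteq> j" using ab1 j l by auto
    have vj: "vtx v j = v ! j" "vtx v l = v ! l" using j l by (simp_all add: vtx_def)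
    have vs: "vtx v (Suc j) = v ! (Suc j mod length v)" "vtx v (Suc l) = v ! (Suc l mod length v)"
      by (simp_all add: vtx_def)
    show False
    proof (cases "l = Suc j mod length v")
      case True
      hence "is_side P k pg a b" unfolding is_side_def using kk j l vj vs
        by (auto simp: v_def intro!: exI[of _ j])
      thus False using assms(5) by simp
    next
      case F1: False
      show False
      proof (cases "j = Suc l mod length v")
        case True
        hence "is_side P k pg a b" unfolding is_side_def using kk j l vj vs
          by (auto simp: v_def intro!: exI[of _ l])
        thus False using assms(5) by simp
      next
        case False
        hence "is_diagonal P k pg a b" unfolding is_diagonal_def using kk j l F1 seg1 \<open>l \<noteq> j\<close>
          by (auto simp: v_def)
        thus False using assms(6) by simp
      qed
    qed
  qed
  have c: "k + 1 \<le> 2 * (p_alpha k (adjacent_piece P pg a b) + q_alpha k (adjacent_piece P pg a b)) \<and>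
    (2 * (p_alpha k (adjacent_piece P pg a b) + q_alpha k (adjacent_piece P pg a b)) = k + 1
      \<longleftrightarrow> odd_sc k (adjacent_piece P pg a b))"
    using comb[OF k1 n1 nk] .
  define S where "S = p_alpha k (adjacent_piece P pg a b) + q_alpha k (adjacent_piece P pg a b)"
  have c': "k + 1 \<le> 2 * S" "2 * S = k + 1 \<longleftrightarrow> odd_sc k (adjacent_piece P pg a b)"
    using c by (simp_all add: S_def)
  have "(k + 1) div 2 \<le> S" using c'(1) by linarith
  moreover have "(k + 1) div 2 = S \<longleftrightarrow> 2 * S = k + 1" using c'(1) by presburger
  ultimately show ?thesis unfolding S_def[symmetric] ceil_half using c'(2) by simp
qed

end
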